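(* Let $K$ be an infinite compact Hausdorff space. Then $sbiort_1(C(K))=hL(K)$, and consequently $hL(K)\leq sbiort(C(K))$.
   Context: For a Banach space $X$ and an ordinal $\alpha$, a transfinite sequence $(x_i,x_i^* )_{i<\alpha}\subseteq X\times X^*$ is semibiorthogonal if $x_i^*(x_i)=1$ for all $i$, $x_i^*(x_j)=0$ for $j<i<\alpha$, and $x_i^*(x_j)\geq0$ for $i<j<\alpha$. $sbiort(X)$ is the supremum of $|\alpha|$ over semibiorthogonal sequences of length $\alpha$. For $C(K)$ (continuous real functions, sup norm, dual = Radon measures), a measure is $1$-supported if it equals $a\delta_x$ for some $a\in\mathbb R$, $x\in K$; $sbiort_1(C(K))$ is the supremum of $|\alpha|$ over semibiorthogonal sequences $(f_i,\mu_i)_{i<\alpha}$ in $C(K)$ with every $\mu_i$ $1$-supported. $hL(K)=\sup\{L(Y):Y\subseteq K\}$, $L(Y)$ the least $\kappa$ such that every open cover of $Y$ has a subcover of size at most $\kappa$. *)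

theory Defs
  imports "HOL-Analysis.Analysis"
begin

(* A transfinite sequence of length alpha is indexed by the field of a well-order r
  (whose order type is alpha); its cardinality is card_of (Field r). *)

definition semibiorthogonal ::
  "'i rel \<Rightarrow> ('i \<Rightarrow> 'x::real_normed_vector) \<Rightarrow> ('i \<Rightarrow> 'x \<Rightarrow> real) \<Rightarrow> bool" where
  "semibiorthogonal r x xs \<longleftrightarrow>
     Well_order r \<and>
     (\<forall>i\<in>Field r. bounded_linear (xs i) \<and> xs i (x i) = 1) \<and>
     (\<forall>i\<in>Field r. \<forall>j\<in>Field r. (j, i) \<in> r \<and> j \<noteq> i \<longrightarrow> xs i (x j) = 0) \<and>
     (\<forall>i\<in>Field r. \<forall>j\<in>Field r. (i, j) \<in> r \<and> i \<noteq> j \<longrightarrow> xs i (x j) \<ge> 0)"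

(* Index sets are taken inside the type of C(K) itself,
  which is no restriction since i |-> x_i is injective for such sequences. *)

definition sbiort_ub :: "'a::topological_space itself \<Rightarrow> 'c set \<Rightarrow> bool" where
  "sbiort_ub K T \<longleftrightarrow>
     (\<forall>(r :: ('a \<Rightarrow>\<^sub>C real) rel) (f :: ('a \<Rightarrow>\<^sub>C real) \<Rightarrow> ('a \<Rightarrow>\<^sub>C real)) xs.
        semibiorthogonal r f xs \<longrightarrow> (card_of (Field r), card_of T) \<in> ordLeq)"

(* Same, restricted to 1-supported functionals a_i * delta_{p_i}. *)

definition sbiort1_ub :: "'a::topological_space itself \<Rightarrow> 'c set \<Rightarrow> bool" where
  "sbiort1_ub K T \<longleftrightarrow>
     (\<forall>(r :: ('a \<Rightarrow>\<^sub>C real) rel) (f :: ('a \<Rightarrow>\<^sub>C real) \<Rightarrow> ('a \<Rightarrow>\<^sub>C real))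
        (a :: ('a \<Rightarrow>\<^sub>C real) \<Rightarrow> real) (p :: ('a \<Rightarrow>\<^sub>C real) \<Rightarrow> 'a).
        semibiorthogonal r f (\<lambda>i g. a i * apply_bcontfun g (p i))
          \<longrightarrow> (card_of (Field r), card_of T) \<in> ordLeq)"

(* card_of T is an upper bound of L(Y) for all Y \<subseteq> K, i.e. of hL(K). *)

definition hL_ub :: "'a::topological_space itself \<Rightarrow> 'c set \<Rightarrow> bool" where
  "hL_ub K T \<longleftrightarrow>
     (\<forall>(Y :: 'a set) \<U>. (\<forall>U\<in>\<U>. open U) \<and> Y \<subseteq> \<Union>\<U> \<longrightarrow>
        (\<exists>\<V>\<subseteq>\<U>. Y \<subseteq> \<Union>\<V> \<and> (card_of \<V>, card_of T) \<in> ordLeq))"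

end

theory Submission
  imports Defs
begin


context includes cardinal_syntax begin

lemma eval_bl: "bounded_linear (\<lambda>g::'a::topological_space \<Rightarrow>\<^sub>C real. c * apply_bcontfun g x)"
proof (rule bounded_linear_intro[where K="\<bar>c\<bar>"])
  fix g h :: "'a \<Rightarrow>\<^sub>C real" and r :: real
  show "c * apply_bcontfun (g + h) x = c * apply_bcontfun g x + c * apply_bcontfun h x"
    by (simp add: algebra_simps)
  show "c * apply_bcontfun (r *\<^sub>R g) x = r *\<^sub>R (c * apply_bcontfun g x)"
    by (simp add: algebra_simps)
  have "norm (apply_bcontfun g x) \<le> norm g" by (rule norm_bounded)
  then show "norm (c * apply_bcontfun g x) \<le> norm g * \<bar>c\<bar>"
    by (simp add: abs_mult mult.commute mult_left_mono)
qed

lemma urysohn_bump: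
  fixes U :: "'a::t2_space set"
  assumes "compact (UNIV::'a set)" "open U" "p \<in> U"
  obtains g :: "'a \<Rightarrow>\<^sub>C real" where "apply_bcontfun g p = 1" "\<forall>x. apply_bcontfun g x \<ge> 0"
    "\<forall>x. x \<notin> U \<longrightarrow> apply_bcontfun g x = 0"
proof -
  have "compact_space (euclidean::'a topology)"
    using assms(1) by (simp add: compact_space_def)
  moreover have "Hausdorff_space (euclidean::'a topology)"
    unfolding Hausdorff_space_def disjnt_def by (simp add: separation_t2)
  ultimately have N: "normal_space (euclidean::'a topology)"
    by (simp add: compact_Hausdorff_or_regular_imp_normal_space)
  obtain f where f: "continuous_map euclidean (top_of_set {0..1::real}) f" "f ` (-U) \<subseteq> {0}" "f ` {p} \<subseteq> {1}"
    using Urysohn_lemma[OF N, of "-U" "{p}" 0 1] assms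
    by (auto simp: disjnt_def closed_Compl)
  have c: "continuous_on UNIV f" and r: "\<And>x. f x \<in> {0..1}"
    using f(1) by (auto simp: continuous_map_in_subtopology)
  have "f \<in> bcontfun"
    by (rule bcontfun_normI[OF c, of 1]) (use r in auto)
  then have e: "apply_bcontfun (Bcontfun f) = f" by (simp add: Bcontfun_inverse)
  show ?thesis
    by (rule that[of "Bcontfun f"]) (use f r in \<open>auto simp: e\<close>)
qed


lemma sb1_imp_hL:
  fixes T :: "'c set"
  assumes cpt: "compact (UNIV :: 'a::t2_space set)" and sb: "sbiort1_ub TYPE('a) T"
  shows "hL_ub TYPE('a) T"
  unfolding hL_ub_def
proof (intro allI impI)
  fix Y :: "'a set" and \<U> :: "'a set set"
  assume "(\<forall>U\<in>\<U>. open U) \<and> Y \<subseteq> \<Union>\<U>"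
  then have op: "\<And>U. U \<in> \<U> \<Longrightarrow> open U" and cov: "Y \<subseteq> \<Union>\<U>" by auto
  obtain w where w: "well_order_on \<U> w" using well_order_on by blast
  have Fw: "Field w = \<U>" using well_order_on_Field[OF w] by simp
  have Ww: "Well_order w" using w Fw by simp
  have wf: "wf (w - Id)" using w by (simp add: well_order_on_def)
  have tot: "\<And>U V. U \<in> \<U> \<Longrightarrow> V \<in> \<U> \<Longrightarrow> U \<noteq> V \<Longrightarrow> (U,V) \<in> w \<or> (V,U) \<in> w"
    using w unfolding well_order_on_def linear_order_on_def total_on_def by blast
  have refl: "Refl w" using Ww
    by (simp add: well_order_on_def linear_order_on_def partial_order_on_def preorder_on_def)
  define S where "S = {U \<in> \<U>. \<exists>y\<in>Y. y \<in> U \<and> (\<forall>V\<in>\<U>. (V,U) \<in> w \<and> V \<noteq> U \<longrightarrow> y \<notin> V)}"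
  have Ssub: "S \<subseteq> \<U>" by (auto simp: S_def)
  have Scov: "Y \<subseteq> \<Union>S"
  proof
    fix y assume y: "y \<in> Y"
    then obtain U0 where "U0 \<in> \<U>" "y \<in> U0" using cov by blast
    then obtain U where U: "U \<in> {U\<in>\<U>. y \<in> U}" and m: "\<And>V. (V,U) \<in> w - Id \<Longrightarrow> V \<notin> {U\<in>\<U>. y\<in>U}"
      using wfE_min[OF wf, of U0 "{U\<in>\<U>. y \<in> U}"] by blast
    then have "U \<in> S" using y by (auto simp: S_def)
    then show "y \<in> \<Union>S" using U by blast
  qed
  have "\<forall>U\<in>S. \<exists>y. y \<in> U \<and> (\<forall>V\<in>\<U>. (V,U) \<in> w \<and> V \<noteq> U \<longrightarrow> y \<notin> V)" by (auto simp: S_def)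
  then obtain pt where pt: "\<And>U. U \<in> S \<Longrightarrow> pt U \<in> U \<and> (\<forall>V\<in>\<U>. (V,U) \<in> w \<and> V \<noteq> U \<longrightarrow> pt U \<notin> V)"
    by metis
  have ex: "\<forall>U\<in>S. \<exists>g::'a \<Rightarrow>\<^sub>C real. apply_bcontfun g (pt U) = 1 \<and> (\<forall>x. apply_bcontfun g x \<ge> 0)
          \<and> (\<forall>x. x \<notin> U \<longrightarrow> apply_bcontfun g x = 0)"
  proof
    fix U assume "U \<in> S"
    then have "open U" "pt U \<in> U" using op Ssub pt by auto
    then show "\<exists>g::'a \<Rightarrow>\<^sub>C real. apply_bcontfun g (pt U) = 1 \<and> (\<forall>x. apply_bcontfun g x \<ge> 0)
          \<and> (\<forall>x. x \<notin> U \<longrightarrow> apply_bcontfun g x = 0)"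
      using urysohn_bump[OF cpt] by metis
  qed
  then obtain \<phi> :: "'a set \<Rightarrow> 'a \<Rightarrow>\<^sub>C real" where \<phi>: "\<And>U. U \<in> S \<Longrightarrow> apply_bcontfun (\<phi> U) (pt U) = 1 \<and> (\<forall>x. apply_bcontfun (\<phi> U) x \<ge> 0)
          \<and> (\<forall>x. x \<notin> U \<longrightarrow> apply_bcontfun (\<phi> U) x = 0)"
    using bchoice[OF ex] by blast
  have van: "\<And>U V. U \<in> S \<Longrightarrow> V \<in> S \<Longrightarrow> (V,U) \<in> w \<Longrightarrow> V \<noteq> U \<Longrightarrow> apply_bcontfun (\<phi> V) (pt U) = 0"
    using pt \<phi> Ssub by blast
  have inj: "inj_on \<phi> S"
  proof (rule inj_onI)
    fix U V assume UV: "U \<in> S" "V \<in> S" "\<phi> U = \<phi> V"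
    show "U = V"
    proof (rule ccontr)
      assume ne: "U \<noteq> V"
      then consider "(U,V) \<in> w" | "(V,U) \<in> w" using tot Ssub UV by blast
      then show False
      proof cases
        case 1 then have "apply_bcontfun (\<phi> U) (pt V) = 0" using van UV ne by blast
        then show False using \<phi>[OF UV(2)] UV(3) by simp
      next
        case 2 then have "apply_bcontfun (\<phi> V) (pt U) = 0" using van UV ne by blast
        then show False using \<phi>[OF UV(1)] UV(3) by simp
      qed
    qed
  qed
  define R where "R = Restr w S"
  have FR: "Field R = S" unfolding R_def using Refl_Field_Restr2[OF refl] Ssub Fw by simp
  have WR: "Well_order R" unfolding R_def using Well_order_Restr[OF Ww] .
  define r where "r = dir_image R \<phi>"
  have Wr: "Well_order r" unfolding r_def using Well_order_dir_image[OF WR] inj FR by simp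
  have Fr: "Field r = \<phi> ` S" unfolding r_def dir_image_Field FR ..
  define p where "p = (\<lambda>g. pt (inv_into S \<phi> g))"
  have p\<phi>: "\<And>U. U \<in> S \<Longrightarrow> p (\<phi> U) = pt U" unfolding p_def using inj by simp
  have rD: "\<And>j i. (j,i) \<in> r \<Longrightarrow> \<exists>V U. V \<in> S \<and> U \<in> S \<and> (V,U) \<in> w \<and> j = \<phi> V \<and> i = \<phi> U"
    unfolding r_def R_def dir_image_def by blast
  have "semibiorthogonal r (\<lambda>i. i) (\<lambda>i g. 1 * apply_bcontfun g (p i))"
    unfolding semibiorthogonal_def
  proof (intro conjI ballI impI)
    show "Well_order r" by fact
  next
    fix i assume "i \<in> Field r"
    then obtain U where U: "U \<in> S" "i = \<phi> U" using Fr by blast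
    show "bounded_linear (\<lambda>g::'a \<Rightarrow>\<^sub>C real. 1 * apply_bcontfun g (p i))" by (rule eval_bl)
    show "1 * apply_bcontfun i (p i) = 1" using U p\<phi> \<phi> by simp
  next
    fix i j assume "i \<in> Field r" "j \<in> Field r" "(j, i) \<in> r \<and> j \<noteq> i"
    then obtain V U where VU: "V \<in> S" "U \<in> S" "(V,U) \<in> w" "j = \<phi> V" "i = \<phi> U" using rD by blast
    then have "V \<noteq> U" using \<open>(j, i) \<in> r \<and> j \<noteq> i\<close> by blast
    then show "1 * apply_bcontfun j (p i) = 0" using van[OF VU(2,1,3)] p\<phi> VU by simp
  next
    fix i j assume "i \<in> Field r" "j \<in> Field r"
    then obtain V where "V \<in> S" "j = \<phi> V" using Fr by blast
    then show "1 * apply_bcontfun j (p i) \<ge> 0" using \<phi> by simp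
  qed
  then have "(card_of (Field r), card_of T) \<in> ordLeq"
    using sb[unfolded sbiort1_ub_def, rule_format, of r "\<lambda>i. i" "\<lambda>_. 1" p] by simp
  moreover have "|S| \<le>o |Field r|" unfolding Fr using card_of_ordLeq inj by blast
  ultimately have "|S| \<le>o |T|" using ordLeq_transitive by blast
  then show "\<exists>\<V>\<subseteq>\<U>. Y \<subseteq> \<Union>\<V> \<and> |\<V>| \<le>o |T|" using Ssub Scov by blast
qed

lemma hL_imp_sb1:
  fixes T :: "'c set"
  assumes inf: "infinite (UNIV :: 'a::t2_space set)" and hl: "hL_ub TYPE('a) T"
  shows "sbiort1_ub TYPE('a) T"
proof -
  have infT: "infinite T"
  proof
    assume fT: "finite T"
    obtain Y :: "'a set" where Y: "finite Y" "card Y = Suc (card T)"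
      using infinite_arbitrarily_large[OF inf] by blast
    define h where "h = (\<lambda>y. - (Y - {y}))"
    have ho: "open (h y)" for y
      unfolding h_def by (intro open_Compl finite_imp_closed) (use Y(1) in auto)
    have "(\<forall>U\<in>h`Y. open U) \<and> Y \<subseteq> \<Union>(h`Y)"
      using ho by (auto simp: h_def)
    then obtain \<V> where V: "\<V> \<subseteq> h`Y" "Y \<subseteq> \<Union>\<V>" "|\<V>| \<le>o |T|"
      using hl[unfolded hL_ub_def, rule_format, of "h`Y" Y] by blast
    have "inj_on h Y \<and> h ` Y \<subseteq> \<V>"
    proof
      show "inj_on h Y"
      proof (rule inj_onI)
        fix x y assume "x \<in> Y" "y \<in> Y" "h x = h y"
        then have "x \<in> h y" by (auto simp: h_def)
        then show "x = y" using \<open>x \<in> Y\<close> by (auto simp: h_def)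
      qed
      show "h`Y \<subseteq> \<V>"
      proof
        fix V assume "V \<in> h`Y"
        then obtain y where y: "y\<in>Y" "V = h y" by blast
        then obtain V' where V': "V' \<in> \<V>" "y \<in> V'" using V by blast
        then obtain y' where y': "y'\<in>Y" "V' = h y'" using V by blast
        then have "y = y'" using V' y by (auto simp: h_def)
        then show "V \<in> \<V>" using y y' V' by simp
      qed
    qed
    then have "|Y| \<le>o |\<V>|" using card_of_ordLeq by blast
    then have "|Y| \<le>o |T|" using V ordLeq_transitive by blast
    then obtain g where "inj_on g Y" "g`Y \<subseteq> T" using card_of_ordLeq[of Y T] by blast
    then have "card Y \<le> card T" using card_inj_on_le fT by blast
    then show False using Y by simp
  qed
  show ?thesis unfolding sbiort1_ub_def
  proof (intro allI impI)
    fix r :: "('a \<Rightarrow>\<^sub>C real) rel" and f :: "('a \<Rightarrow>\<^sub>C real) \<Rightarrow> ('a \<Rightarrow>\<^sub>C real)"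
      and a :: "('a \<Rightarrow>\<^sub>C real) \<Rightarrow> real" and p :: "('a \<Rightarrow>\<^sub>C real) \<Rightarrow> 'a"
    assume sb: "semibiorthogonal r f (\<lambda>i g. a i * apply_bcontfun g (p i))"
    have Wr: "Well_order r" using sb by (simp add: semibiorthogonal_def)
    have F1a: "\<And>i. i \<in> Field r \<Longrightarrow> a i * apply_bcontfun (f i) (p i) = 1"
      using sb by (simp add: semibiorthogonal_def)
    then have F1: "\<And>i. i \<in> Field r \<Longrightarrow> apply_bcontfun (f i) (p i) \<noteq> 0"
      and a0: "\<And>i. i \<in> Field r \<Longrightarrow> a i \<noteq> 0" by force+
    have F2: "\<And>i j. i \<in> Field r \<Longrightarrow> j \<in> Field r \<Longrightarrow> (j,i) \<in> r \<Longrightarrow> j \<noteq> i \<Longrightarrow> apply_bcontfun (f j) (p i) = 0"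
      using sb a0 by (auto simp: semibiorthogonal_def)
    have lin: "Linear_order r" using Wr by (simp add: well_order_on_def)
    have refl: "\<And>i. i \<in> Field r \<Longrightarrow> (i,i) \<in> r" using lin
      by (simp add: linear_order_on_def partial_order_on_def preorder_on_def refl_on_def)
    have trans: "\<And>x y z. (x,y)\<in>r \<Longrightarrow> (y,z)\<in>r \<Longrightarrow> (x,z)\<in>r" using lin
      unfolding linear_order_on_def partial_order_on_def preorder_on_def trans_def by blast
    have antis: "\<And>x y. (x,y)\<in>r \<Longrightarrow> (y,x)\<in>r \<Longrightarrow> x = y" using lin
      unfolding linear_order_on_def partial_order_on_def antisym_def by blast
    have tot: "\<And>x y. x \<in> Field r \<Longrightarrow> y \<in> Field r \<Longrightarrow> (x,y) \<in> r \<or> (y,x) \<in> r"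
      using lin refl unfolding linear_order_on_def total_on_def by metis
    have wf: "wf (r - Id)" using Wr by (simp add: well_order_on_def)
    have inF: "\<And>x y. (x,y) \<in> r \<Longrightarrow> x \<in> Field r \<and> y \<in> Field r" by (auto intro: FieldI1 FieldI2)
    define Op where "Op = (\<lambda>i. {x. \<exists>j\<in>Field r. (j,i) \<in> r \<and> apply_bcontfun (f j) x \<noteq> 0})"
    have Oopen: "open (Op i)" for i
    proof -
      have "Op i = (\<Union>j\<in>{j\<in>Field r. (j,i)\<in>r}. {x. apply_bcontfun (f j) x \<noteq> 0})" by (auto simp: Op_def)
      then show "open (Op i)" by (auto intro!: open_UN open_Collect_neq continuous_on_const)
    qed
    define Z where "Z = {i\<in>Field r. |{j. (j,i) \<in> r}| \<le>o |T|}"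
    have "(\<forall>U\<in>Op`Z. open U) \<and> p`Z \<subseteq> \<Union>(Op`Z)"
      using Oopen F1 refl by (force simp: Op_def Z_def)
    then obtain \<V> where V: "\<V> \<subseteq> Op`Z" "p`Z \<subseteq> \<Union>\<V>" "|\<V>| \<le>o |T|"
      using hl[unfolded hL_ub_def, rule_format, of "Op`Z" "p`Z"] by blast
    have "\<forall>V\<in>\<V>. \<exists>s\<in>Z. V = Op s" using V(1) by blast
    then obtain sel where sel: "\<And>V. V\<in>\<V> \<Longrightarrow> sel V \<in> Z \<and> V = Op (sel V)" by metis
    define S where "S = sel`\<V>"
    have SZ: "S \<subseteq> Z" using sel by (auto simp: S_def)
    have ST: "|S| \<le>o |T|" using card_of_image[of sel \<V>] V(3) ordLeq_transitive unfolding S_def by blast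
    have Zsub: "Z \<subseteq> (\<Union>s\<in>S. {j. (j,s) \<in> r})"
    proof
      fix z assume z: "z \<in> Z"
      then obtain V where "V \<in> \<V>" "p z \<in> V" using V(2) by blast
      then have s: "sel V \<in> S" "p z \<in> Op (sel V)" using sel[of V] by (auto simp: S_def)
      define s where "s = sel V"
      obtain j where j: "j \<in> Field r" "(j,s) \<in> r" "apply_bcontfun (f j) (p z) \<noteq> 0"
        using s unfolding Op_def s_def by blast
      have zF: "z \<in> Field r" "s \<in> Field r" using z s SZ by (auto simp: Z_def s_def)
      have "(z,s) \<in> r"
      proof (rule ccontr)
        assume nzs: "(z,s) \<notin> r"
        then have "(s,z) \<in> r" using tot zF by blast
        then have jz: "(j,z) \<in> r" using trans j by blast
        have "j \<noteq> z" using j(2) nzs by auto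
        then show False using F2[OF zF(1) j(1) jz] j(3) by simp
      qed
      then show "z \<in> (\<Union>s\<in>S. {j. (j,s) \<in> r})" using s s_def by blast
    qed
    have ZT: "|Z| \<le>o |T|"
    proof -
      have "|\<Union>s\<in>S. {j. (j,s) \<in> r}| \<le>o |T|"
        by (rule card_of_UNION_ordLeq_infinite[OF infT ST]) (use SZ in \<open>auto simp: Z_def\<close>)
      then show ?thesis using card_of_mono1[OF Zsub] ordLeq_transitive by blast
    qed
    have "Field r \<subseteq> Z"
    proof (rule ccontr)
      assume "\<not> Field r \<subseteq> Z"
      then obtain x where "x \<in> Field r - Z" by blast
      then obtain i0 where i0: "i0 \<in> Field r - Z" and m: "\<And>y. (y,i0) \<in> r - Id \<Longrightarrow> y \<notin> Field r - Z"
        using wfE_min[OF wf] by metis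
      have "{j. (j,i0) \<in> r} \<subseteq> Z \<union> {i0}" using m inF by blast
      moreover have "|Z \<union> {i0}| \<le>o |T|"
      proof -
        have "T \<noteq> {}" using infT by auto
        then have "|{i0}| \<le>o |T|" by (rule card_of_singl_ordLeq)
        show ?thesis
          by (rule card_of_Un_ordLeq_infinite_Field)
            (use infT ZT \<open>|{i0}| \<le>o |T|\<close> in \<open>simp_all add: Field_card_of card_of_card_order_on\<close>)
      qed
      ultimately have "|{j. (j,i0) \<in> r}| \<le>o |T|" using card_of_mono1 ordLeq_transitive by blast
      then have "i0 \<in> Z" using i0 by (simp add: Z_def)
      then show False using i0 by blast
    qed
    then show "(card_of (Field r), card_of T) \<in> ordLeq" using card_of_mono1 ZT ordLeq_transitive by blast
  qed
qed

end

theorem mainTheorem16: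
  fixes T :: "'c set"
  assumes "compact (UNIV :: 'a::t2_space set)"
    and "infinite (UNIV :: 'a set)"
  shows "(sbiort1_ub TYPE('a) T \<longleftrightarrow> hL_ub TYPE('a) T) \<and>
         (sbiort_ub TYPE('a) T \<longrightarrow> hL_ub TYPE('a) T)"
proof -
  have "sbiort_ub TYPE('a) T \<Longrightarrow> sbiort1_ub TYPE('a) T"
    unfolding sbiort_ub_def sbiort1_ub_def by blast
  then show ?thesis using sb1_imp_hL[OF assms(1)] hL_imp_sb1[OF assms(2)] by blast
qed

end
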